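(* Let $\mathcal{X}=\{x_1,\dots,x_N\}$ and $\mathcal{Y}=\{y_1,\dots,y_M\}$ be finite alphabets, $P_X$ a probability mass function on $\mathcal{X}$ with full support, and $U=(u_{ij})$ an $N\times M$ matrix whose $i$-th row is a permutation of $\{1,\dots,M\}$. Fix $h^*\in\{1,\dots,M\}$ and let $\mathcal{Y}^+(h^* )=\{y_j\in\mathcal{Y}:\exists i\in\{1,\dots,N\},\ u_{ij}\ge h^*\}$. Consider the optimization problem $$\min_{P_{Y|X}}\ \max_{y\in\mathcal{S}_Y}\ \ell_{P_{Y|X}\times P_X}(X\to y)$$ over all mechanisms $P_{Y|X}=(p_{ij})$ satisfying $p_{ij}=0$ whenever $u_{ij}<h^*$, together with the additional constraint $\mathcal{S}_Y=\mathcal{Y}^+(h^* )$. Then the mechanism $M^*(h^* )$ defined by $$[M^*(h^* )]_{ij}=\begin{cases}0 & \text{if } u_{ij}<h^*,\\ \frac{1}{M-h^*+1} & \text{otherwise},\end{cases}$$ is an optimal solution of this problem.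
   Context: A privacy mechanism is a conditional distribution $P_{Y|X}$, written as an $N\times M$ row-stochastic matrix with $p_{ij}=P_{Y|X=x_i}(y_j)$. With $P_Y(y)=\sum_x P_X(x)P_{Y|X=x}(y)$, the output support is $\mathcal{S}_Y=\{y\in\mathcal{Y}:P_Y(y)>0\}$ and $P_{X|Y=y}(x)=P_{Y|X=x}(y)P_X(x)/P_Y(y)$. The pointwise maximal leakage (PML) of $y\in\mathcal{S}_Y$ is $\ell_{P_{Y|X}\times P_X}(X\to y)=\log\max_{x\in\mathcal{X}}\frac{P_{X|Y=y}(x)}{P_X(x)}$. The entry $u_{ij}=k$ means that the pair $(x_i,y_j)$ yields the $k$-th lowest utility value for input $x_i$ (all utility values for a given input are distinct). *)

theory Defs
  imports Complex_Main
begin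

text \<open>Indices are 0-based: x_i for i < N, y_j for j < M.
  A mechanism is an N x M row-stochastic matrix p i j = P_{Y|X=x_i}(y_j).\<close>

definition is_mechanism :: "nat \<Rightarrow> nat \<Rightarrow> (nat \<Rightarrow> nat \<Rightarrow> real) \<Rightarrow> bool" where
  "is_mechanism N M p \<longleftrightarrow>
     (\<forall>i<N. \<forall>j<M. 0 \<le> p i j) \<and> (\<forall>i<N. (\<Sum>j<M. p i j) = 1)"

definition out_prob :: "nat \<Rightarrow> (nat \<Rightarrow> real) \<Rightarrow> (nat \<Rightarrow> nat \<Rightarrow> real) \<Rightarrow> nat \<Rightarrow> real" where
  "out_prob N PX p j = (\<Sum>i<N. PX i * p i j)"

definition out_support :: "nat \<Rightarrow> nat \<Rightarrow> (nat \<Rightarrow> real) \<Rightarrow> (nat \<Rightarrow> nat \<Rightarrow> real) \<Rightarrow> nat set" where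
  "out_support N M PX p = {j. j < M \<and> out_prob N PX p j > 0}"

definition posterior :: "nat \<Rightarrow> (nat \<Rightarrow> real) \<Rightarrow> (nat \<Rightarrow> nat \<Rightarrow> real) \<Rightarrow> nat \<Rightarrow> nat \<Rightarrow> real" where
  "posterior N PX p j i = p i j * PX i / out_prob N PX p j"

definition pml :: "nat \<Rightarrow> (nat \<Rightarrow> real) \<Rightarrow> (nat \<Rightarrow> nat \<Rightarrow> real) \<Rightarrow> nat \<Rightarrow> real" where
  "pml N PX p j = ln (Max ((\<lambda>i. posterior N PX p j i / PX i) ` {..<N}))"

definition max_pml :: "nat \<Rightarrow> nat \<Rightarrow> (nat \<Rightarrow> real) \<Rightarrow> (nat \<Rightarrow> nat \<Rightarrow> real) \<Rightarrow> real" where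
  "max_pml N M PX p = Max (pml N PX p ` out_support N M PX p)"

definition Yplus :: "nat \<Rightarrow> nat \<Rightarrow> (nat \<Rightarrow> nat \<Rightarrow> nat) \<Rightarrow> nat \<Rightarrow> nat set" where
  "Yplus N M u h = {j. j < M \<and> (\<exists>i<N. h \<le> u i j)}"

definition feasible :: "nat \<Rightarrow> nat \<Rightarrow> (nat \<Rightarrow> real) \<Rightarrow> (nat \<Rightarrow> nat \<Rightarrow> nat) \<Rightarrow> nat
    \<Rightarrow> (nat \<Rightarrow> nat \<Rightarrow> real) \<Rightarrow> bool" where
  "feasible N M PX u h p \<longleftrightarrow> is_mechanism N M p
     \<and> (\<forall>i<N. \<forall>j<M. u i j < h \<longrightarrow> p i j = 0)
     \<and> out_support N M PX p = Yplus N M u h"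

definition Mstar :: "nat \<Rightarrow> (nat \<Rightarrow> nat \<Rightarrow> nat) \<Rightarrow> nat \<Rightarrow> nat \<Rightarrow> nat \<Rightarrow> real" where
  "Mstar M u h i j = (if u i j < h then 0 else 1 / (real M - real h + 1))"

end

theory Submission
  imports Defs
begin

lemma card_row:
  assumes "bij_betw (u i) {..<M} {1..M}" "1 \<le> h" "h \<le> M"
  shows "card {j. j<M \<and> h \<le> u i j} = M - h + 1"
proof -
  have inj: "inj_on (u i) {..<M}" and im: "u i ` {..<M} = {1..M}"
    using assms(1) by (auto simp: bij_betw_def)
  have "u i ` {j. j<M \<and> h \<le> u i j} = {h..M}"
  proof
    show "u i ` {j. j<M \<and> h \<le> u i j} \<subseteq> {h..M}" using im by auto
    show "{h..M} \<subseteq> u i ` {j. j<M \<and> h \<le> u i j}"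
    proof
      fix v assume v: "v \<in> {h..M}"
      then have "v \<in> u i ` {..<M}" using im assms(2) by auto
      then obtain j where "j<M" "u i j = v" by auto
      then show "v \<in> u i ` {j. j<M \<and> h \<le> u i j}" using v by auto
    qed
  qed
  moreover have "inj_on (u i) {j. j<M \<and> h \<le> u i j}"
    by (rule inj_on_subset[OF inj]) auto
  ultimately have "card {j. j<M \<and> h \<le> u i j} = card {h..M}"
    by (metis card_image)
  then show ?thesis using assms(2,3) by simp
qed

lemma Max_mono_pointwise:
  fixes f g :: "nat \<Rightarrow> real"
  assumes "finite S" "\<forall>j\<in>S. f j \<le> g j"
  shows "Max (f ` S) \<le> Max (g ` S)"
proof (cases "S = {}")
  case True then show ?thesis by simp
next
  case False
  have "Max (f ` S) \<in> f ` S" using assms False by (intro Max_in) auto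
  then obtain j where j: "j \<in> S" "f j = Max (f ` S)" by auto
  have "g j \<le> Max (g ` S)" using assms j by auto
  moreover have "f j \<le> g j" using assms j by auto
  ultimately show ?thesis using j(2) by linarith
qed

theorem theorem1:
  fixes N M h :: nat and PX :: "nat \<Rightarrow> real" and u :: "nat \<Rightarrow> nat \<Rightarrow> nat"
  assumes "1 \<le> N" and "1 \<le> M"
    and "\<forall>i<N. PX i > 0" and "(\<Sum>i<N. PX i) = 1"
    and "\<forall>i<N. bij_betw (u i) {..<M} {1..M}"
    and "1 \<le> h" and "h \<le> M"
  shows "feasible N M PX u h (Mstar M u h)
    \<and> (\<forall>p. feasible N M PX u h p \<longrightarrow> max_pml N M PX (Mstar M u h) \<le> max_pml N M PX p)"
proof -
  define c where "c = 1 / (real M - real h + 1)"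
  have cpos: "c > 0" using assms(7) unfolding c_def by simp
  have Ms: "Mstar M u h i j = (if u i j < h then 0 else c)" for i j
    unfolding Mstar_def c_def by simp
  define S where "S j = (\<Sum>i<N. if h \<le> u i j then PX i else 0)" for j
  have Spos: "S j > 0" if "j \<in> Yplus N M u h" for j
  proof -
    from that obtain i where i: "i<N" "h \<le> u i j" unfolding Yplus_def by auto
    show ?thesis unfolding S_def
      by (rule sum_pos2[of _ i]) (use i assms(3) in auto)
  qed
  have OPs: "out_prob N PX (Mstar M u h) j = c * S j" for j
    unfolding out_prob_def S_def sum_distrib_left
    by (rule sum.cong) (auto simp: Ms)
  have mech: "is_mechanism N M (Mstar M u h)"
    unfolding is_mechanism_def
  proof (intro conjI allI impI)
    fix i j assume "i<N" "j<M"
    show "0 \<le> Mstar M u h i j" using cpos by (simp add: Ms)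
  next
    fix i assume i: "i<N"
    have "(\<Sum>j<M. Mstar M u h i j) = (\<Sum>j\<in>{j\<in>{..<M}. h \<le> u i j}. c)"
      by (subst sum.inter_filter) (auto simp: Ms intro!: sum.cong)
    also have "{j\<in>{..<M}. h \<le> u i j} = {j. j<M \<and> h \<le> u i j}" by auto
    also have "(\<Sum>j\<in>{j. j<M \<and> h \<le> u i j}. c) = real (M - h + 1) * c"
      using card_row[of u i M h] assms(5,6,7) i by simp
    also have "\<dots> = 1" unfolding c_def using assms(7) by (simp add: of_nat_diff)
    finally show "(\<Sum>j<M. Mstar M u h i j) = 1" .
  qed
  have supp: "out_support N M PX (Mstar M u h) = Yplus N M u h"
  proof -
    have "out_prob N PX (Mstar M u h) j > 0 \<longleftrightarrow> (\<exists>i<N. h \<le> u i j)" for j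
    proof
      assume "\<exists>i<N. h \<le> u i j"
      then have "S j > 0" unfolding S_def using assms(3)
        by (auto intro!: sum_pos2)
      then show "out_prob N PX (Mstar M u h) j > 0" using OPs cpos by simp
    next
      assume "out_prob N PX (Mstar M u h) j > 0"
      then have Sn: "S j \<noteq> 0" using OPs by auto
      show "\<exists>i<N. h \<le> u i j"
      proof (rule ccontr)
        assume "\<not> (\<exists>i<N. h \<le> u i j)"
        then have "S j = 0" unfolding S_def by (auto intro!: sum.neutral)
        then show False using Sn by simp
      qed
    qed
    then show ?thesis unfolding out_support_def Yplus_def by auto
  qed
  have feasM: "feasible N M PX u h (Mstar M u h)"
    unfolding feasible_def using mech supp by (auto simp: Ms)
  have pmlM: "pml N PX (Mstar M u h) j = ln (1 / S j)" if j: "j \<in> Yplus N M u h" for j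
  proof -
    have Sp: "S j > 0" using Spos j by auto
    obtain i0 where i0: "i0 < N" "h \<le> u i0 j" using j unfolding Yplus_def by auto
    have eq: "(\<lambda>i. posterior N PX (Mstar M u h) j i / PX i) ` {..<N}
        = (\<lambda>i. Mstar M u h i j / (c * S j)) ` {..<N}"
      by (rule image_cong) (use assms(3) in \<open>auto simp: posterior_def OPs\<close>)
    have "Max ((\<lambda>i. Mstar M u h i j / (c * S j)) ` {..<N}) = 1 / S j"
    proof (rule Max_eqI)
      show "finite ((\<lambda>i. Mstar M u h i j / (c * S j)) ` {..<N})" by simp
      show "y \<le> 1 / S j" if "y \<in> (\<lambda>i. Mstar M u h i j / (c * S j)) ` {..<N}" for y
        using that Sp cpos by (auto simp: Ms)
      show "1 / S j \<in> (\<lambda>i. Mstar M u h i j / (c * S j)) ` {..<N}"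
        using i0 cpos by (intro image_eqI[of _ _ i0]) (auto simp: Ms)
    qed
    then show ?thesis unfolding pml_def eq by simp
  qed
  have opt: "max_pml N M PX (Mstar M u h) \<le> max_pml N M PX p" if fp: "feasible N M PX u h p" for p
  proof -
    have mp: "is_mechanism N M p" and z: "\<forall>i<N. \<forall>j<M. u i j < h \<longrightarrow> p i j = 0"
      and sp: "out_support N M PX p = Yplus N M u h" using fp unfolding feasible_def by auto
    have le: "pml N PX (Mstar M u h) j \<le> pml N PX p j" if j: "j \<in> Yplus N M u h" for j
    proof -
      have jM: "j < M" using j unfolding Yplus_def by auto
      have Sp: "S j > 0" using Spos j by auto
      have Pp: "out_prob N PX p j > 0" using j sp unfolding out_support_def by auto
      have "Max ((\<lambda>i. p i j) ` {..<N}) \<in> (\<lambda>i. p i j) ` {..<N}"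
        using assms(1) by (intro Max_in) (auto simp: lessThan_empty_iff)
      then obtain i0 where i0: "i0 < N" "p i0 j = Max ((\<lambda>i. p i j) ` {..<N})"
        by auto
      have ge: "p i j \<le> p i0 j" if "i < N" for i using i0 that by auto
      have "out_prob N PX p j = (\<Sum>i<N. if h \<le> u i j then PX i * p i j else 0)"
        unfolding out_prob_def by (rule sum.cong) (use z jM in auto)
      also have "\<dots> \<le> (\<Sum>i<N. if h \<le> u i j then PX i * p i0 j else 0)"
        by (rule sum_mono) (use ge assms(3) in \<open>auto intro: mult_left_mono less_imp_le\<close>)
      also have "\<dots> = p i0 j * S j" unfolding S_def sum_distrib_left
        by (rule sum.cong) auto
      finally have bnd: "out_prob N PX p j \<le> p i0 j * S j" .
      have "1 / S j \<le> p i0 j / out_prob N PX p j"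
        using bnd Sp Pp by (simp add: divide_simps mult.commute)
      also have "p i0 j / out_prob N PX p j = posterior N PX p j i0 / PX i0"
      proof -
        have "PX i0 > 0" using assms(3) i0 by auto
        then show ?thesis by (simp add: posterior_def)
      qed
      also have "\<dots> \<le> Max ((\<lambda>i. posterior N PX p j i / PX i) ` {..<N})"
        using i0 by auto
      finally have key: "1 / S j \<le> Max ((\<lambda>i. posterior N PX p j i / PX i) ` {..<N})" .
      then have "ln (1 / S j) \<le> ln (Max ((\<lambda>i. posterior N PX p j i / PX i) ` {..<N}))"
      proof -
        have "0 < 1 / S j" using Sp by simp
        moreover have "0 < Max ((\<lambda>i. posterior N PX p j i / PX i) ` {..<N})"
          using calculation key by linarith
        ultimately show ?thesis using key by (simp only: ln_le_cancel_iff)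
      qed
      moreover have "pml N PX p j = ln (Max ((\<lambda>i. posterior N PX p j i / PX i) ` {..<N}))"
        by (simp only: pml_def)
      ultimately show ?thesis using pmlM[OF j] by linarith
    qed
    show ?thesis unfolding max_pml_def supp sp
      by (rule Max_mono_pointwise) (use le in \<open>auto simp: Yplus_def\<close>)
  qed
  show ?thesis using feasM opt by blast
qed

end
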